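(* In the setting described in the context, suppose that the matrix $J$ satisfies $\sup_{|i-j|\le R}|J_{i,j}|<\infty$ for every $R\ge0$. Then for every $\ell\ge0$, \[ \lim_{n\to\infty}\Big|\int_{\mathbb{R}}x^\ell\,d\nu_n(x)-\int_{\mathbb{R}}x^\ell\,d\eta_n(x)\Big|=0, \] and consequently $\lim_{n\to\infty}\big|\int f\,d\nu_n-\int f\,d\eta_n\big|=0$ for every polynomial $f\in\mathbb{R}[x]$.
   Context: Let $r\ge1$ and let $\mu_1,\dots,\mu_r$ be positive Borel measures on $\mathbb{R}$ with all moments finite, forming a perfect system: for every $\vec n\in\mathbb{N}_0^r$ there is a monic polynomial $P_{\vec n}$ of degree $|\vec n|=n_1+\dots+n_r$ with $\int x^kP_{\vec n}\,d\mu_j=0$ for $0\le k\le n_j-1$, $1\le j\le r$. Type I polynomials $A_{\vec n}=(A_{\vec n,1},\dots,A_{\vec n,r})$: $\deg A_{\vec n,j}\le n_j-1$, $\sum_j\int x^kA_{\vec n,j}\,d\mu_j=0$ for $0\le k\le|\vec n|-2$, and $=1$ for $k=|\vec n|-1$. Let $\mu$ be a positive measure with $\mu_j\ll\mu$, $w_j=d\mu_j/d\mu$, $Q_{\vec n}=\sum_jA_{\vec n,j}w_j$. Fix a path $(\vec n_\ell)_{\ell\ge0}$ with $|\vec n_\ell|=\ell$, $\vec n_{\ell+1}=\vec n_\ell+\vec e_{i_\ell}$ ($\vec e_j$ the $j$-th unit vector), and set $p_\ell=P_{\vec n_\ell}$, $q_\ell=Q_{\vec n_{\ell+1}}$, so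 that $\int p_\ell q_{\ell'}\,d\mu=\delta_{\ell,\ell'}$. The Christoffel--Darboux kernel is $K_n(x,y)=\sum_{j=0}^{n-1}p_j(x)q_j(y)$. Define $\nu_n=\frac1n\sum_{y:\,p_n(y)=0}\delta_y$ (zeros counted with multiplicity) and the signed measure $d\eta_n(x)=\frac1nK_n(x,x)\,d\mu(x)$. The matrix $J=[J_{\ell,k}]_{\ell,k\ge0}$ is defined by $xp_\ell=\sum_{k=0}^{\ell+1}J_{\ell,k}p_k$, $J_{\ell,k}=0$ for $k>\ell+1$. *)

theory Defs
  imports "HOL-Analysis.Analysis" "HOL-Computational_Algebra.Polynomial"
begin

text \<open>Multi-indices are functions nat \<Rightarrow> nat; only the components j < r matter.
  Components are 0-based: j = 0, ..., r-1.\<close>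

definition mindex_size :: "nat \<Rightarrow> (nat \<Rightarrow> nat) \<Rightarrow> nat" where
  "mindex_size r n = (\<Sum>j<r. n j)"

definition mop_cond :: "(nat \<Rightarrow> real measure) \<Rightarrow> nat \<Rightarrow> (nat \<Rightarrow> nat) \<Rightarrow> real poly \<Rightarrow> bool" where
  "mop_cond \<mu>s r n p \<longleftrightarrow> lead_coeff p = 1 \<and> degree p = mindex_size r n \<and>
     (\<forall>j<r. \<forall>k<n j. (\<integral>x. x ^ k * poly p x \<partial>\<mu>s j) = 0)"

definition perfect_system :: "(nat \<Rightarrow> real measure) \<Rightarrow> nat \<Rightarrow> bool" where
  "perfect_system \<mu>s r \<longleftrightarrow> (\<forall>n. \<exists>!p. mop_cond \<mu>s r n p)"

definition mop :: "(nat \<Rightarrow> real measure) \<Rightarrow> nat \<Rightarrow> (nat \<Rightarrow> nat) \<Rightarrow> real poly" where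
  "mop \<mu>s r n = (THE p. mop_cond \<mu>s r n p)"

text \<open>Type I condition (components j \<ge> r are set to 0 for definiteness).\<close>
definition typeI_cond :: "(nat \<Rightarrow> real measure) \<Rightarrow> nat \<Rightarrow> (nat \<Rightarrow> nat) \<Rightarrow> (nat \<Rightarrow> real poly) \<Rightarrow> bool" where
  "typeI_cond \<mu>s r n A \<longleftrightarrow>
     (\<forall>j<r. if n j = 0 then A j = 0 else degree (A j) < n j) \<and>
     (\<forall>j\<ge>r. A j = 0) \<and>
     (\<forall>k<mindex_size r n. (\<Sum>j<r. \<integral>x. x ^ k * poly (A j) x \<partial>\<mu>s j)
        = (if k = mindex_size r n - 1 then 1 else 0))"

definition typeI :: "(nat \<Rightarrow> real measure) \<Rightarrow> nat \<Rightarrow> (nat \<Rightarrow> nat) \<Rightarrow> nat \<Rightarrow> real poly" where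
  "typeI \<mu>s r n = (THE A. typeI_cond \<mu>s r n A)"

text \<open>The path: n_l = sum over k<l of e_(i k), i.e. n_0 = 0 and n_(l+1) = n_l + e_(i l).\<close>
definition path_idx :: "(nat \<Rightarrow> nat) \<Rightarrow> nat \<Rightarrow> nat \<Rightarrow> nat" where
  "path_idx i l = (\<lambda>j. card {k. k < l \<and> i k = j})"

definition pth :: "(nat \<Rightarrow> real measure) \<Rightarrow> nat \<Rightarrow> (nat \<Rightarrow> nat) \<Rightarrow> nat \<Rightarrow> real poly" where
  "pth \<mu>s r i l = mop \<mu>s r (path_idx i l)"

definition qth :: "(nat \<Rightarrow> real measure) \<Rightarrow> nat \<Rightarrow> (nat \<Rightarrow> nat) \<Rightarrow> (nat \<Rightarrow> real \<Rightarrow> real)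
    \<Rightarrow> nat \<Rightarrow> real \<Rightarrow> real" where
  "qth \<mu>s r i w l x = (\<Sum>j<r. poly (typeI \<mu>s r (path_idx i (Suc l)) j) x * w j x)"

definition CD_kernel :: "(nat \<Rightarrow> real measure) \<Rightarrow> nat \<Rightarrow> (nat \<Rightarrow> nat) \<Rightarrow> (nat \<Rightarrow> real \<Rightarrow> real)
    \<Rightarrow> nat \<Rightarrow> real \<Rightarrow> real \<Rightarrow> real" where
  "CD_kernel \<mu>s r i w n x y = (\<Sum>k<n. poly (pth \<mu>s r i k) x * qth \<mu>s r i w k y)"

definition Jmat :: "(nat \<Rightarrow> real measure) \<Rightarrow> nat \<Rightarrow> (nat \<Rightarrow> nat) \<Rightarrow> nat \<Rightarrow> nat \<Rightarrow> real" where
  "Jmat \<mu>s r i l = (THE c. (\<forall>k>Suc l. c k = 0) \<and>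
      [:0, 1:] * pth \<mu>s r i l = (\<Sum>k\<le>Suc l. smult (c k) (pth \<mu>s r i k)))"

text \<open>Integral of a real polynomial f against the normalized zero counting measure nu_n of p_n
  (zeros taken in the complex plane, counted with multiplicity).\<close>
definition nu_int :: "(nat \<Rightarrow> real measure) \<Rightarrow> nat \<Rightarrow> (nat \<Rightarrow> nat) \<Rightarrow> nat \<Rightarrow> real poly \<Rightarrow> complex" where
  "nu_int \<mu>s r i n f =
     (\<Sum>z\<in>{z. poly (map_poly complex_of_real (pth \<mu>s r i n)) z = 0}.
        of_nat (order z (map_poly complex_of_real (pth \<mu>s r i n))) *
        poly (map_poly complex_of_real f) z) / of_nat n"

definition eta_int :: "real measure \<Rightarrow> (nat \<Rightarrow> real measure) \<Rightarrow> nat \<Rightarrow> (nat \<Rightarrow> nat)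
    \<Rightarrow> (nat \<Rightarrow> real \<Rightarrow> real) \<Rightarrow> nat \<Rightarrow> real poly \<Rightarrow> real" where
  "eta_int \<mu> \<mu>s r i w n f = (\<integral>x. poly f x * CD_kernel \<mu>s r i w n x x \<partial>\<mu>) / real n"

end

theory Submission
  imports Defs "HOL-Computational_Algebra.Fundamental_Theorem_Algebra"
begin

definition deg_lt :: "'a::zero poly \<Rightarrow> nat \<Rightarrow> bool" where
  "deg_lt f n \<longleftrightarrow> (\<forall>k\<ge>n. coeff f k = 0)"

definition is_basis :: "(nat \<Rightarrow> 'a::field poly) \<Rightarrow> bool" where
  "is_basis b \<longleftrightarrow> (\<forall>k. degree (b k) = k \<and> lead_coeff (b k) = 1)"

lemma deg_lt_degree: "deg_lt f n \<longleftrightarrow> (f = 0 \<or> degree f < n)"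
proof
  assume h: "deg_lt f n"
  show "f = 0 \<or> degree f < n"
  proof (rule ccontr)
    assume "\<not> (f = 0 \<or> degree f < n)"
    then have "f \<noteq> 0" "degree f \<ge> n" by auto
    then show False using h unfolding deg_lt_def by auto
  qed
next
  assume "f = 0 \<or> degree f < n"
  then show "deg_lt f n" unfolding deg_lt_def by (auto intro: coeff_eq_0)
qed

lemma deg_lt_Suc_degree: "deg_lt f (Suc (degree f))"
  by (simp add: deg_lt_degree)

lemma deg_lt_mono: "deg_lt f n \<Longrightarrow> n \<le> m \<Longrightarrow> deg_lt f m"
  unfolding deg_lt_def by auto

lemma basis_top: "is_basis b \<Longrightarrow> coeff (b k) k = 1"
  unfolding is_basis_def by metis

lemma basis_high: "is_basis b \<Longrightarrow> k < m \<Longrightarrow> coeff (b k) m = 0"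
  unfolding is_basis_def by (metis coeff_eq_0)

lemma basis_expand:
  assumes b: "is_basis b"
  shows "deg_lt f n \<Longrightarrow> \<exists>a. f = (\<Sum>k<n. smult (a k) (b k))"
proof (induction n arbitrary: f)
  case 0
  then have "f = 0" unfolding deg_lt_def by (simp add: poly_eq_iff)
  then show ?case by simp
next
  case (Suc n)
  define c where "c = coeff f n"
  define f' where "f' = f - smult c (b n)"
  have "deg_lt f' n"
    unfolding deg_lt_def f'_def
  proof (intro allI impI)
    fix k assume "n \<le> k"
    show "coeff (f - smult c (b n)) k = 0"
    proof (cases "k = n")
      case True then show ?thesis using basis_top[OF b, of n] by (simp add: c_def)
    next
      case False
      then have "k > n" "k \<ge> Suc n" using \<open>n \<le> k\<close> by auto
      then show ?thesis using Suc.prems basis_high[OF b, of n k] unfolding deg_lt_def by auto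
    qed
  qed
  then obtain a where a: "f' = (\<Sum>k<n. smult (a k) (b k))" using Suc.IH by blast
  have "(\<Sum>k<n. smult ((a(n:=c)) k) (b k)) = (\<Sum>k<n. smult (a k) (b k))"
    by (rule sum.cong) auto
  then show ?case
    by (intro exI[of _ "a(n := c)"]) (simp add: a[symmetric] f'_def)
qed

lemma coeff_basis_sum_top:
  assumes b: "is_basis b"
  shows "coeff (\<Sum>k<Suc n. smult (a k) (b k)) n = a n"
proof -
  have "coeff (\<Sum>k<Suc n. smult (a k) (b k)) n = (\<Sum>k<Suc n. a k * coeff (b k) n)"
    by (simp add: coeff_sum)
  also have "\<dots> = (\<Sum>k<Suc n. if k = n then a k else 0)"
    by (rule sum.cong) (use basis_top[OF b] basis_high[OF b] in auto)
  finally show ?thesis by simp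
qed

lemma basis_unique:
  assumes b: "is_basis b"
  shows "(\<Sum>k<n. smult (a k) (b k)) = 0 \<Longrightarrow> k < n \<Longrightarrow> a k = 0"
proof (induction n)
  case 0 then show ?case by simp
next
  case (Suc n)
  have "a n = coeff (\<Sum>k<Suc n. smult (a k) (b k)) n"
    using coeff_basis_sum_top[OF b, where n=n and a=a] by simp
  also have "\<dots> = 0" using Suc.prems(1) by (simp only: coeff_0)
  finally have an: "a n = 0" .
  then have "(\<Sum>k<n. smult (a k) (b k)) = 0" using Suc.prems by simp
  then show ?case using Suc an by (cases "k = n") auto
qed

definition coord :: "(nat \<Rightarrow> 'a::field poly) \<Rightarrow> 'a poly \<Rightarrow> nat \<Rightarrow> 'a" where
  "coord b f = (SOME a. (\<forall>k>degree f. a k = 0) \<and> f = (\<Sum>k<Suc (degree f). smult (a k) (b k)))"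

lemma coord_spec:
  assumes b: "is_basis b"
  shows "(\<forall>k>degree f. coord b f k = 0) \<and> f = (\<Sum>k<Suc (degree f). smult (coord b f k) (b k))"
proof -
  obtain a where a: "f = (\<Sum>k<Suc (degree f). smult (a k) (b k))"
    using basis_expand[OF b deg_lt_Suc_degree] by blast
  define a' where "a' k = (if k \<le> degree f then a k else 0)" for k
  have "f = (\<Sum>k<Suc (degree f). smult (a' k) (b k))"
    by (subst a, rule sum.cong) (auto simp: a'_def)
  then have "\<exists>a. (\<forall>k>degree f. a k = 0) \<and> f = (\<Sum>k<Suc (degree f). smult (a k) (b k))"
    by (intro exI[of _ a']) (auto simp: a'_def)
  then show ?thesis unfolding coord_def by (rule someI_ex)
qed

lemma sum_extend_zero:
  fixes n N :: nat
  assumes "n \<le> N"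
  shows "(\<Sum>k<n. smult (a k) (b k)) = (\<Sum>k<N. smult (if k < n then a k else 0) (b k))"
proof -
  have "(\<Sum>k<N. smult (if k < n then a k else 0) (b k)) = (\<Sum>k<n. smult (if k < n then a k else 0) (b k))"
    by (rule sum.mono_neutral_right) (use assms in auto)
  then show ?thesis by simp
qed

lemma coord_eq:
  assumes b: "is_basis b" and f: "f = (\<Sum>k<n. smult (a k) (b k))"
  shows "coord b f k = (if k < n then a k else 0)"
proof -
  define N where "N = max (Suc k) (max n (Suc (degree f)))"
  have 1: "f = (\<Sum>k<N. smult (if k < n then a k else 0) (b k))"
    using f sum_extend_zero[of n N a b] by (simp add: N_def)
  have 2: "f = (\<Sum>k<N. smult (if k < Suc (degree f) then coord b f k else 0) (b k))"
    using coord_spec[OF b, of f] sum_extend_zero[of "Suc (degree f)" N "coord b f" b] by (simp add: N_def)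
  have "(\<Sum>k<N. smult ((if k < n then a k else 0) - (if k < Suc (degree f) then coord b f k else 0)) (b k)) = 0"
    using 1 2 by (simp add: smult_diff_left sum_subtractf)
  from basis_unique[OF b this, of k] have "(if k < n then a k else 0) = (if k < Suc (degree f) then coord b f k else 0)"
    by (simp add: N_def)
  moreover have "k \<ge> Suc (degree f) \<Longrightarrow> coord b f k = 0" using coord_spec[OF b, of f] by auto
  ultimately show ?thesis by (auto split: if_splits)
qed

lemma coord_expand:
  assumes b: "is_basis b" and f: "deg_lt f n"
  shows "f = (\<Sum>k<n. smult (coord b f k) (b k))"
proof -
  obtain a where a: "f = (\<Sum>k<n. smult (a k) (b k))" using basis_expand[OF b f] by blast
  show ?thesis using coord_eq[OF b a] by (subst a) (intro sum.cong; simp)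
qed

lemma coord_high:
  assumes b: "is_basis b" and f: "deg_lt f n" and "n \<le> k"
  shows "coord b f k = 0"
  using coord_eq[OF b coord_expand[OF b f], of k] assms by simp

lemma coord_add: assumes b: "is_basis b" shows "coord b (f + g) k = coord b f k + coord b g k"
proof -
  define n where "n = Suc (max (degree f) (degree g))"
  have "f = (\<Sum>k<n. smult (coord b f k) (b k))"
    by (rule coord_expand[OF b], auto simp: deg_lt_degree n_def less_Suc_eq_le)
  moreover have "g = (\<Sum>k<n. smult (coord b g k) (b k))"
    by (rule coord_expand[OF b], auto simp: deg_lt_degree n_def less_Suc_eq_le)
  ultimately
  have "f + g = (\<Sum>k<n. smult (coord b f k + coord b g k) (b k))"
    by (simp add: smult_add_left sum.distrib)
  from coord_eq[OF b this, of k] show ?thesis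
    using coord_high[OF b, of f n k] coord_high[OF b, of g n k]
    by (auto simp: deg_lt_degree n_def less_Suc_eq_le)
qed

lemma smult_sum_right': "smult c (\<Sum>x\<in>A. F x) = (\<Sum>x\<in>A. smult c (F x))"
  by (induction A rule: infinite_finite_induct) (auto simp: smult_add_right)

lemma coord_smult: assumes b: "is_basis b" shows "coord b (smult c f) k = c * coord b f k"
proof -
  define n where "n = Suc (degree f)"
  have "f = (\<Sum>k<n. smult (coord b f k) (b k))"
    by (rule coord_expand[OF b], simp add: deg_lt_degree n_def)
  then have "smult c f = (\<Sum>k<n. smult (c * coord b f k) (b k))"
    by (metis (no_types, lifting) smult_sum_right' smult_smult sum.cong)
  from coord_eq[OF b this, of k] show ?thesis
    using coord_high[OF b, of f n k] by (auto simp: deg_lt_degree n_def)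
qed

lemma coord_0: assumes b: "is_basis b" shows "coord b 0 k = 0"
  using coord_smult[OF b, of 0 0 k] by simp

lemma coord_minus: assumes b: "is_basis b" shows "coord b (- f) k = - coord b f k"
  using coord_smult[OF b, of "-1" f k] by simp

lemma coord_diff: assumes b: "is_basis b" shows "coord b (f - g) k = coord b f k - coord b g k"
  using coord_add[OF b, of f "-g" k] coord_minus[OF b, of g k] by simp

lemma coord_sum: assumes b: "is_basis b" shows "coord b (\<Sum>x\<in>A. F x) k = (\<Sum>x\<in>A. coord b (F x) k)"
  by (induction A rule: infinite_finite_induct) (auto simp: coord_0[OF b] coord_add[OF b])

lemma coord_basis: assumes b: "is_basis b" shows "coord b (b m) k = (if k = m then 1 else 0)"
proof -
  have "b m = (\<Sum>j<Suc m. smult (if j = m then 1 else 0) (b j))"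
    by (simp add: if_distrib cong: if_cong)
  from coord_eq[OF b this, of k] show ?thesis by auto
qed

definition ebas :: "(nat \<Rightarrow> 'a::field) \<Rightarrow> nat \<Rightarrow> 'a poly" where
  "ebas zs k = (\<Prod>i<k. [:- zs i, 1:])"

lemma ebas_Suc: "ebas zs (Suc k) = ebas zs k * [:- zs k, 1:]"
  by (simp add: ebas_def)

lemma ebas_monic: "degree (ebas zs k) = k \<and> lead_coeff (ebas zs k) = 1"
proof (induction k)
  case 0 then show ?case by (simp add: ebas_def)
next
  case (Suc k)
  have "ebas zs k \<noteq> 0" using Suc by auto
  have d: "degree (ebas zs (Suc k)) = Suc k"
    unfolding ebas_Suc by (subst degree_mult_eq) (use Suc \<open>ebas zs k \<noteq> 0\<close> in auto)
  have "lead_coeff (ebas zs (Suc k)) = 1"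
  proof -
    have "lead_coeff (ebas zs k) = 1" using Suc by blast
    then show ?thesis unfolding ebas_Suc lead_coeff_mult by simp
  qed
  with d show ?case by simp
qed

lemma ebas_basis: "is_basis (ebas zs)"
  unfolding is_basis_def using ebas_monic by blast

lemma ebas_nz: "ebas zs k \<noteq> 0"
  using ebas_monic[of zs k] by auto

lemma x_ebas: "pCons 0 (ebas zs k) = ebas zs (Suc k) + smult (zs k) (ebas zs k)"
  by (simp add: ebas_Suc)

lemma pCons0_mult: "pCons 0 p = [:0, 1:] * (p :: 'a::comm_semiring_1 poly)"
  by simp

lemma pCons0_add: "pCons 0 (p + q) = pCons 0 p + pCons 0 q"
  by simp

lemma pCons0_sum: "pCons 0 (\<Sum>x\<in>A. F x) = (\<Sum>x\<in>A. pCons 0 (F x))"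
  by (induction A rule: infinite_finite_induct) (auto simp: pCons0_add)

lemma deg_lt_mod: "P \<noteq> 0 \<Longrightarrow> deg_lt (f mod P) (degree P)"
  using degree_mod_less[of P f] by (auto simp: deg_lt_degree)

lemma mod_deg_lt: "deg_lt f (degree P) \<Longrightarrow> f mod P = f"
  by (cases "f = 0") (auto simp: deg_lt_degree mod_poly_less)

lemma deg_lt_ebas: "k < n \<Longrightarrow> deg_lt (ebas zs k) n"
  using ebas_monic[of zs k] by (simp add: deg_lt_degree)

definition inspan :: "(nat \<Rightarrow> 'a::field) \<Rightarrow> nat \<Rightarrow> nat \<Rightarrow> 'a poly \<Rightarrow> bool" where
  "inspan zs n k f \<longleftrightarrow> (\<exists>a. f = (\<Sum>j\<in>{k<..<n}. smult (a j) (ebas zs j)))"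

lemma inspan_0: "inspan zs n k 0"
  unfolding inspan_def by (intro exI[of _ "\<lambda>_. 0"]) simp

lemma inspan_add: "inspan zs n k f \<Longrightarrow> inspan zs n k g \<Longrightarrow> inspan zs n k (f + g)"
  unfolding inspan_def
proof (elim exE)
  fix a c assume "f = (\<Sum>j\<in>{k<..<n}. smult (a j) (ebas zs j))" "g = (\<Sum>j\<in>{k<..<n}. smult (c j) (ebas zs j))"
  then have "f + g = (\<Sum>j\<in>{k<..<n}. smult (a j + c j) (ebas zs j))"
    by (simp add: smult_add_left sum.distrib)
  then show "\<exists>a. f + g = (\<Sum>j\<in>{k<..<n}. smult (a j) (ebas zs j))" by (rule exI[where x="\<lambda>j. a j + c j"])
qed

lemma inspan_smult: "inspan zs n k f \<Longrightarrow> inspan zs n k (smult c f)"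
  unfolding inspan_def
proof (elim exE)
  fix a assume "f = (\<Sum>j\<in>{k<..<n}. smult (a j) (ebas zs j))"
  then have "smult c f = (\<Sum>j\<in>{k<..<n}. smult (c * a j) (ebas zs j))"
    by (simp add: smult_sum_right')
  then show "\<exists>a. smult c f = (\<Sum>j\<in>{k<..<n}. smult (a j) (ebas zs j))" by (rule exI[where x="\<lambda>j. c * a j"])
qed

lemma inspan_sum: "(\<And>x. x \<in> A \<Longrightarrow> inspan zs n k (F x)) \<Longrightarrow> inspan zs n k (\<Sum>x\<in>A. F x)"
  by (induction A rule: infinite_finite_induct) (auto intro: inspan_add inspan_0)

lemma inspan_ebas: "k < j \<Longrightarrow> j < n \<Longrightarrow> inspan zs n k (ebas zs j)"
  unfolding inspan_def
proof -
  assume kj: "k < j" "j < n"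
  have "\<And>i. smult (if i = j then 1 else 0) (ebas zs i) = (if i = j then ebas zs j else 0)" by simp
  then have "(\<Sum>i\<in>{k<..<n}. smult (if i = j then 1 else 0) (ebas zs i)) = (\<Sum>i\<in>{k<..<n}. (if i = j then ebas zs j else 0))"
    by (intro sum.cong) auto
  also have "\<dots> = ebas zs j" using kj by (simp add: sum.delta)
  finally have "ebas zs j = (\<Sum>i\<in>{k<..<n}. smult (if i = j then 1 else 0) (ebas zs i))" by simp
  then show "\<exists>a. ebas zs j = (\<Sum>i\<in>{k<..<n}. smult (a i) (ebas zs i))" by (rule exI[where x="\<lambda>i. if i = j then 1 else 0"])
qed

lemma x_ebas_mod:
  assumes "j < n"
  shows "(pCons 0 (ebas zs j)) mod ebas zs n =
     smult (zs j) (ebas zs j) + (if Suc j < n then ebas zs (Suc j) else 0)"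
proof -
  have dn: "degree (ebas zs n) = n" using ebas_monic by blast
  have "(pCons 0 (ebas zs j)) mod ebas zs n = ebas zs (Suc j) mod ebas zs n + smult (zs j) (ebas zs j) mod ebas zs n"
    by (subst x_ebas) (simp only: poly_mod_add_left)
  also have "smult (zs j) (ebas zs j) mod ebas zs n = smult (zs j) (ebas zs j)"
    by (rule mod_deg_lt) (use assms deg_lt_ebas[of j n zs] dn in \<open>auto simp: deg_lt_def\<close>)
  also have "ebas zs (Suc j) mod ebas zs n = (if Suc j < n then ebas zs (Suc j) else 0)"
  proof (cases "Suc j < n")
    case True then show ?thesis using mod_deg_lt[of "ebas zs (Suc j)" "ebas zs n"] deg_lt_ebas dn by auto
  next
    case False then have "Suc j = n" using assms by auto
    then show ?thesis by simp
  qed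
  finally show ?thesis by simp
qed

lemma inspan_x_mod:
  assumes "inspan zs n k f"
  shows "inspan zs n k ((pCons 0 f) mod ebas zs n)"
proof -
  obtain a where a: "f = (\<Sum>j\<in>{k<..<n}. smult (a j) (ebas zs j))" using assms unfolding inspan_def by blast
  have "(pCons 0 f) mod ebas zs n = (\<Sum>j\<in>{k<..<n}. smult (a j) ((pCons 0 (ebas zs j)) mod ebas zs n))"
  proof -
    have "pCons 0 f = (\<Sum>j\<in>{k<..<n}. smult (a j) (pCons 0 (ebas zs j)))"
      by (simp add: a pCons0_sum)
    then have "(pCons 0 f) mod ebas zs n = (\<Sum>j\<in>{k<..<n}. smult (a j) (pCons 0 (ebas zs j))) mod ebas zs n"
      by simp
    also have "\<dots> = (\<Sum>j\<in>{k<..<n}. smult (a j) (pCons 0 (ebas zs j)) mod ebas zs n)"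
      by (induction rule: infinite_finite_induct[where A="{k<..<n}"]) (auto simp: poly_mod_add_left)
    also have "\<dots> = (\<Sum>j\<in>{k<..<n}. smult (a j) (pCons 0 (ebas zs j) mod ebas zs n))"
      by (intro sum.cong refl) (metis mod_smult_left smult_pCons mult_zero_right)
    finally show ?thesis .
  qed
  also have "inspan zs n k \<dots>"
  proof (rule inspan_sum, rule inspan_smult)
    fix j assume j: "j \<in> {k<..<n}"
    show "inspan zs n k ((pCons 0 (ebas zs j)) mod ebas zs n)"
      using j by (auto simp: x_ebas_mod intro!: inspan_add inspan_smult inspan_ebas inspan_0)
  qed
  finally show ?thesis .
qed

lemma mult_mod_ebas:
  assumes "k < n"
  shows "\<exists>f. inspan zs n k f \<and> (g * ebas zs k) mod ebas zs n = smult (poly g (zs k)) (ebas zs k) + f"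
proof (induction g rule: pCons_induct)
  case 0
  show ?case by (rule exI[of _ 0]) (simp add: inspan_0)
next
  case (pCons c g)
  then obtain f where f: "inspan zs n k f" "(g * ebas zs k) mod ebas zs n = smult (poly g (zs k)) (ebas zs k) + f"
    by blast
  have dn: "degree (ebas zs n) = n" using ebas_monic by blast
  have ck: "smult c (ebas zs k) mod ebas zs n = smult c (ebas zs k)"
    by (rule mod_deg_lt) (use assms deg_lt_ebas[of k n zs] dn in \<open>auto simp: deg_lt_def\<close>)
  define v where "v = poly g (zs k)"
  have xm: "(pCons 0 (g * ebas zs k)) mod ebas zs n = (pCons 0 ((g * ebas zs k) mod ebas zs n)) mod ebas zs n"
    using mod_mult_right_eq[of "[:0, 1:]" "g * ebas zs k" "ebas zs n"] by simp
  have "pCons c g * ebas zs k = smult c (ebas zs k) + pCons 0 (g * ebas zs k)"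
    by simp
  then have h1: "(pCons c g * ebas zs k) mod ebas zs n
      = smult c (ebas zs k) mod ebas zs n + (pCons 0 (g * ebas zs k)) mod ebas zs n"
    by (simp only: poly_mod_add_left)
  have h2: "smult c (ebas zs k) mod ebas zs n + (pCons 0 (g * ebas zs k)) mod ebas zs n = smult c (ebas zs k) + (pCons 0 (smult v (ebas zs k) + f)) mod ebas zs n"
    using ck xm f(2) unfolding v_def by (simp only:)
  have "pCons 0 (smult v (ebas zs k) + f) = smult v (pCons 0 (ebas zs k)) + pCons 0 f"
    by simp
  then have "(pCons 0 (smult v (ebas zs k) + f)) mod ebas zs n
     = smult v ((pCons 0 (ebas zs k)) mod ebas zs n) + (pCons 0 f) mod ebas zs n"
    by (simp only: poly_mod_add_left mod_smult_left)
  then have h3: "(pCons 0 (smult v (ebas zs k) + f)) mod ebas zs n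
     = smult v (smult (zs k) (ebas zs k) + (if Suc k < n then ebas zs (Suc k) else 0)) + (pCons 0 f) mod ebas zs n"
    using assms by (simp only: x_ebas_mod)
  have h4: "(pCons c g * ebas zs k) mod ebas zs n = smult c (ebas zs k) + (smult v (smult (zs k) (ebas zs k) + (if Suc k < n then ebas zs (Suc k) else 0)) + (pCons 0 f) mod ebas zs n)"
    using h1 h2 h3 by (simp only:)
  have eq: "(pCons c g * ebas zs k) mod ebas zs n = smult (poly (pCons c g) (zs k)) (ebas zs k) +
      (smult v (if Suc k < n then ebas zs (Suc k) else 0) + (pCons 0 f) mod ebas zs n)"
    unfolding h4 by (simp add: v_def smult_add_left smult_add_right algebra_simps)
  have "inspan zs n k (smult v (if Suc k < n then ebas zs (Suc k) else 0) + (pCons 0 f) mod ebas zs n)"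
  proof (intro inspan_add inspan_smult inspan_x_mod f(1))
    show "inspan zs n k (if Suc k < n then ebas zs (Suc k) else 0)"
      by (cases "Suc k < n") (auto intro: inspan_ebas inspan_0)
  qed
  with eq show ?case by (intro exI[where x="smult v (if Suc k < n then ebas zs (Suc k) else 0) + (pCons 0 f) mod ebas zs n"] conjI)
qed

lemma coord_inspan:
  assumes "inspan zs n k f"
  shows "coord (ebas zs) f k = 0"
proof -
  obtain a where a: "f = (\<Sum>j\<in>{k<..<n}. smult (a j) (ebas zs j))" using assms unfolding inspan_def by blast
  have "f = (\<Sum>j<n. smult (if j \<in> {k<..<n} then a j else 0) (ebas zs j))"
  proof -
    have "(\<Sum>j<n. smult (if j \<in> {k<..<n} then a j else 0) (ebas zs j)) =
          (\<Sum>j\<in>{k<..<n}. smult (if j \<in> {k<..<n} then a j else 0) (ebas zs j))"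
      by (rule sum.mono_neutral_right) auto
    then show ?thesis by (simp add: a)
  qed
  from coord_eq[OF ebas_basis this, of k] show ?thesis by auto
qed

lemma coord_mult_mod_ebas:
  assumes "k < n"
  shows "coord (ebas zs) ((g * ebas zs k) mod ebas zs n) k = poly g (zs k)"
proof -
  obtain f where f: "inspan zs n k f" "(g * ebas zs k) mod ebas zs n = smult (poly g (zs k)) (ebas zs k) + f"
    using mult_mod_ebas[OF assms] by blast
  show ?thesis
    using f by (simp add: coord_add[OF ebas_basis] coord_smult[OF ebas_basis] coord_basis[OF ebas_basis] coord_inspan)
qed

lemma mulmod_sum:
  "(g * (\<Sum>j\<in>A. smult (a j) (h j))) mod P = (\<Sum>j\<in>A. smult (a j) ((g * h j) mod P))"
proof (induction A rule: infinite_finite_induct)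
  case (insert x F)
  then show ?case by (simp add: distrib_left poly_mod_add_left mod_smult_left)
qed auto

lemma trace_basis_change:
  fixes b e :: "nat \<Rightarrow> 'a::field poly"
  assumes b: "is_basis b" and e: "is_basis e" and P: "P \<noteq> 0" "degree P = n"
  shows "(\<Sum>k<n. coord b ((g * b k) mod P) k) = (\<Sum>k<n. coord e ((g * e k) mod P) k)"
proof -
  have bk: "b k = (\<Sum>j<n. smult (coord e (b k) j) (e j))" if "k < n" for k
    using coord_expand[OF e, of "b k" n] b that unfolding is_basis_def by (simp add: deg_lt_degree)
  have ej: "(g * e j) mod P = (\<Sum>k<n. smult (coord b ((g * e j) mod P) k) (b k))" for j
    using coord_expand[OF b deg_lt_mod[OF P(1)]] P(2) by simp
  have "(\<Sum>k<n. coord b ((g * b k) mod P) k) = (\<Sum>k<n. \<Sum>j<n. coord e (b k) j * coord b ((g * e j) mod P) k)"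
  proof (rule sum.cong[OF refl])
    fix k assume "k \<in> {..<n}"
    then have "(g * b k) mod P = (\<Sum>j<n. smult (coord e (b k) j) ((g * e j) mod P))"
      using bk[of k] mulmod_sum[of g "coord e (b k)" e "{..<n}" P] by simp
    then show "coord b ((g * b k) mod P) k = (\<Sum>j<n. coord e (b k) j * coord b ((g * e j) mod P) k)"
      by (simp add: coord_sum[OF b] coord_smult[OF b])
  qed
  also have "\<dots> = (\<Sum>j<n. \<Sum>k<n. coord e (b k) j * coord b ((g * e j) mod P) k)"
    by (rule sum.swap)
  also have "\<dots> = (\<Sum>j<n. coord e ((g * e j) mod P) j)"
  proof (rule sum.cong[OF refl])
    fix j assume "j \<in> {..<n}"
    have "coord e ((g * e j) mod P) j = coord e (\<Sum>k<n. smult (coord b ((g * e j) mod P) k) (b k)) j"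
      using ej[of j] by metis
    also have "\<dots> = (\<Sum>k<n. coord b ((g * e j) mod P) k * coord e (b k) j)"
      by (simp add: coord_sum[OF e] coord_smult[OF e])
    finally show "(\<Sum>k<n. coord e (b k) j * coord b ((g * e j) mod P) k) = coord e ((g * e j) mod P) j"
      by (simp add: mult.commute)
  qed
  finally show ?thesis .
qed

lemma sum_count_mset:
  assumes "finite S" "set_mset M \<subseteq> S"
  shows "(\<Sum>z\<in>S. of_nat (count M z) * h z) = sum_mset (image_mset h M)"
  using assms(2)
proof (induction M)
  case empty then show ?case by simp
next
  case (add x M)
  have "(\<Sum>z\<in>S. of_nat (count (add_mset x M) z) * h z) = (\<Sum>z\<in>S. of_nat (count M z) * h z + (if z = x then h z else 0))"
    by (intro sum.cong) (auto simp: algebra_simps)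
  also have "\<dots> = (\<Sum>z\<in>S. of_nat (count M z) * h z) + h x"
    using add.prems assms(1) by (simp add: sum.distrib sum.delta)
  finally show ?case using add by (simp add: add.commute)
qed

lemma proots_linear: "proots [:- a, 1:] = {#a :: 'a::idom#}"
proof (rule multiset_eqI)
  fix x
  show "count (proots [:- a, 1:]) x = count {#a#} x"
  proof (cases "x = a")
    case True
    then show ?thesis using order_power_n_n[of a 1] by simp
  next
    case False
    then show ?thesis by (simp add: order_0I)
  qed
qed

lemma proots_ebas: fixes n :: nat shows "proots (ebas zs n) = (\<Sum>i<n. {#zs i#})"
  unfolding ebas_def
  by (subst proots_prod) (auto simp: proots_linear)

lemma sum_mset_image_sum_single: fixes n :: nat shows "sum_mset (image_mset h (\<Sum>i<n. {#zs i#})) = (\<Sum>i<n. h (zs i))"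
  by (induction n) (auto simp: add.commute)

lemma complex_roots_trace:
  fixes p :: "complex poly" and b :: "nat \<Rightarrow> complex poly"
  assumes b: "is_basis b" and p: "lead_coeff p = 1" "degree p = n"
  shows "(\<Sum>z\<in>{z. poly p z = 0}. of_nat (order z p) * poly g z) = (\<Sum>k<n. coord b ((g * b k) mod p) k)"
proof -
  obtain zs where zs: "smult (lead_coeff p) (\<Prod>i<degree p. [:-zs i, 1:]) = p"
    using complex_poly_decompose' by blast
  then have pz: "p = ebas zs n" using p by (simp add: ebas_def)
  have p0: "p \<noteq> 0" using p by auto
  have "(\<Sum>z\<in>{z. poly p z = 0}. of_nat (order z p) * poly g z) =
        (\<Sum>z\<in>{z. poly p z = 0}. of_nat (count (proots p) z) * poly g z)"
    using p0 by simp
  also have "\<dots> = sum_mset (image_mset (poly g) (proots p))"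
    by (rule sum_count_mset) (use p0 poly_roots_finite[OF p0] in auto)
  also have "\<dots> = (\<Sum>i<n. poly g (zs i))"
    unfolding pz proots_ebas sum_mset_image_sum_single ..
  also have "\<dots> = (\<Sum>k<n. coord (ebas zs) ((g * ebas zs k) mod ebas zs n) k)"
    by (rule sum.cong[OF refl]) (simp add: coord_mult_mod_ebas)
  also have "\<dots> = (\<Sum>k<n. coord b ((g * b k) mod p) k)"
    unfolding pz by (rule trace_basis_change[OF ebas_basis b ebas_nz]) (use ebas_monic in blast)
  finally show ?thesis .
qed

lemma poly_monom_expand:
  assumes "deg_lt h m"
  shows "h = (\<Sum>t<m. monom (coeff h t) t)"
proof (rule poly_eqI)
  fix s
  have "coeff (\<Sum>t<m. monom (coeff h t) t) s = (\<Sum>t<m. if t = s then coeff h t else 0)"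
    by (simp add: coeff_sum)
  also have "\<dots> = (if s < m then coeff h s else 0)"
    by (simp add: sum.delta)
  also have "\<dots> = coeff h s" using assms unfolding deg_lt_def by auto
  finally show "coeff h s = coeff (\<Sum>t<m. monom (coeff h t) t) s" by simp
qed

lemma poly_borel: "(\<lambda>x. poly h x) \<in> borel_measurable (borel :: real measure)"
  by (intro borel_measurable_continuous_onI continuous_intros)

locale mctx =
  fixes r :: nat and \<mu>s :: "nat \<Rightarrow> real measure" and \<mu> :: "real measure"
    and w :: "nat \<Rightarrow> real \<Rightarrow> real" and i :: "nat \<Rightarrow> nat"
  assumes borel_mus: "\<forall>j<r. sets (\<mu>s j) = sets borel"
    and moments: "\<forall>j<r. \<forall>k::nat. integrable (\<mu>s j) (\<lambda>x. x ^ k)"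
    and perfect: "perfect_system \<mu>s r"
    and borel_mu: "sets \<mu> = sets borel"
    and w_meas: "\<forall>j<r. w j \<in> borel_measurable borel \<and> (\<forall>x. 0 \<le> w j x)"
    and w_RN: "\<forall>j<r. \<mu>s j = density \<mu> (\<lambda>x. ennreal (w j x))"
    and path: "\<forall>l. i l < r"
begin

abbreviation pidx where "pidx \<equiv> path_idx i"
abbreviation PP where "PP \<equiv> pth \<mu>s r i"

lemma pidx_0: "pidx 0 j = 0"
  by (simp add: path_idx_def)

lemma pidx_Suc: "pidx (Suc l) j = pidx l j + (if i l = j then 1 else 0)"
proof (cases "i l = j")
  case True
  have "{k. k < Suc l \<and> i k = j} = insert l {k. k < l \<and> i k = j}" using True by auto
  then show ?thesis using True by (simp add: path_idx_def)
next
  case False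
  have "{k. k < Suc l \<and> i k = j} = {k. k < l \<and> i k = j}" using False less_Suc_eq by auto
  then show ?thesis using False by (simp add: path_idx_def)
qed

lemma pidx_mono: "l \<le> m \<Longrightarrow> pidx l j \<le> pidx m j"
  unfolding path_idx_def by (intro card_mono) auto

lemma size_pidx: "mindex_size r (pidx l) = l"
proof (induction l)
  case 0 then show ?case by (simp add: mindex_size_def pidx_0)
next
  case (Suc l)
  have "mindex_size r (pidx (Suc l)) = (\<Sum>j<r. pidx l j) + (\<Sum>j<r. if i l = j then 1 else 0)"
    by (simp add: mindex_size_def pidx_Suc sum.distrib)
  also have "(\<Sum>j<r. if i l = j then 1 else 0) = (1::nat)"
    using path by (simp add: sum.delta)
  finally show ?case using Suc by (simp add: mindex_size_def)
qed

lemma mop_P: "mop_cond \<mu>s r (pidx l) (PP l)"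
proof -
  have "\<exists>!p. mop_cond \<mu>s r (pidx l) p" using perfect unfolding perfect_system_def by blast
  then show ?thesis unfolding pth_def mop_def by (rule theI')
qed

lemma P_unique: "mop_cond \<mu>s r (pidx l) q \<Longrightarrow> q = PP l"
  using perfect mop_P unfolding perfect_system_def by blast

lemma P_deg: "degree (PP l) = l" and P_lead: "lead_coeff (PP l) = 1"
  using mop_P[of l] size_pidx[of l] unfolding mop_cond_def by auto

lemma P_basis: "is_basis PP"
  unfolding is_basis_def using P_deg P_lead by auto

lemma P_nz: "PP l \<noteq> 0"
  using P_lead[of l] by auto

lemma P_orth: "j < r \<Longrightarrow> k < pidx l j \<Longrightarrow> (\<integral>x. x ^ k * poly (PP l) x \<partial>\<mu>s j) = 0"
  using mop_P[of l] unfolding mop_cond_def by blast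

definition L :: "nat \<Rightarrow> real poly \<Rightarrow> real" where
  "L j f = (\<integral>x. poly f x \<partial>\<mu>s j)"

lemma int_poly: assumes "j < r" shows "integrable (\<mu>s j) (\<lambda>x. poly f x)"
proof -
  have "integrable (\<mu>s j) (\<lambda>x. \<Sum>t\<le>degree f. coeff f t * x ^ t)"
    by (intro Bochner_Integration.integrable_sum Bochner_Integration.integrable_mult_right) (use moments assms in auto)
  then show ?thesis by (simp add: poly_altdef)
qed

lemma poly_add_fun: "poly (f + g) = (\<lambda>x. poly f x + poly g x)"
  by (rule ext) simp

lemma poly_smult_fun: "poly (smult c f) = (\<lambda>x. c * poly f x)"
  by (rule ext) simp

lemma poly_0_fun: "poly 0 = (\<lambda>x. 0)"
  by (rule ext) simp

lemma poly_xk_fun: "poly (monom 1 k * (f::real poly)) = (\<lambda>x. x ^ k * poly f x)"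
  by (rule ext) (simp add: poly_monom)

lemma L_add: "j < r \<Longrightarrow> L j (f + g) = L j f + L j g"
  unfolding L_def poly_add_fun by (rule Bochner_Integration.integral_add) (auto intro: int_poly)

lemma L_smult: "L j (smult c f) = c * L j f"
  unfolding L_def poly_smult_fun by simp

lemma L_0: "L j 0 = 0"
  unfolding L_def poly_0_fun by simp

lemma L_sum: "j < r \<Longrightarrow> L j (\<Sum>x\<in>A. F x) = (\<Sum>x\<in>A. L j (F x))"
  by (induction A rule: infinite_finite_induct) (auto simp: L_add L_0)

lemma L_diff: "j < r \<Longrightarrow> L j (f - g) = L j f - L j g"
  using L_add[of j f "-g"] L_smult[of j "-1" g] by simp

lemma int_xk: "(\<integral>x. x ^ k * poly f x \<partial>\<mu>s j) = L j (monom 1 k * f)"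
  unfolding L_def poly_xk_fun ..

definition Phi :: "real poly \<Rightarrow> (nat \<Rightarrow> real poly) \<Rightarrow> real" where
  "Phi f A = (\<Sum>j<r. L j (f * A j))"

definition Psi :: "nat \<Rightarrow> (nat \<Rightarrow> real poly) \<Rightarrow> real" where
  "Psi k A = (\<Sum>j<r. \<integral>x. x ^ k * poly (A j) x \<partial>\<mu>s j)"

lemma Psi_Phi: "Psi k A = Phi (monom 1 k) A"
  unfolding Psi_def Phi_def by (simp add: int_xk)

lemma Phi_add_left: "Phi (f + g) A = Phi f A + Phi g A"
  unfolding Phi_def by (simp add: distrib_right L_add sum.distrib)

lemma Phi_smult_left: "Phi (smult c f) A = c * Phi f A"
  unfolding Phi_def by (simp add: L_smult sum_distrib_left)

lemma Phi_0_left: "Phi 0 A = 0"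
  unfolding Phi_def by (simp add: L_0)

lemma Phi_sum_left: "Phi (\<Sum>x\<in>S. F x) A = (\<Sum>x\<in>S. Phi (F x) A)"
  by (induction S rule: infinite_finite_induct) (auto simp: Phi_add_left Phi_0_left)

lemma Phi_add_right: "Phi f (\<lambda>j. A j + B j) = Phi f A + Phi f B"
  unfolding Phi_def by (simp add: distrib_left L_add sum.distrib)

lemma Phi_smult_right: "Phi f (\<lambda>j. smult c (A j)) = c * Phi f A"
  unfolding Phi_def by (simp add: L_smult sum_distrib_left)

lemma Phi_diff_right: "Phi f (\<lambda>j. A j - B j) = Phi f A - Phi f B"
  unfolding Phi_def by (simp add: right_diff_distrib L_diff sum_subtractf)

lemma Psi_add: "Psi k (\<lambda>j. A j + B j) = Psi k A + Psi k B"
  unfolding Psi_Phi by (rule Phi_add_right)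

lemma Psi_smult: "Psi k (\<lambda>j. smult c (A j)) = c * Psi k A"
  unfolding Psi_Phi by (rule Phi_smult_right)

lemma Psi_diff: "Psi k (\<lambda>j. A j - B j) = Psi k A - Psi k B"
  unfolding Psi_Phi by (rule Phi_diff_right)

lemma Phi_expand:
  assumes "deg_lt f m"
  shows "Phi f A = (\<Sum>t<m. coeff f t * Psi t A)"
proof -
  have "Phi f A = Phi (\<Sum>t<m. monom (coeff f t) t) A"
    using poly_monom_expand[OF assms] by simp
  also have "\<dots> = (\<Sum>t<m. coeff f t * Psi t A)"
    unfolding Phi_sum_left Psi_Phi
    by (rule sum.cong[OF refl]) (metis Phi_smult_left smult_monom mult.right_neutral)
  finally show ?thesis .
qed

definition inW :: "nat \<Rightarrow> (nat \<Rightarrow> real poly) \<Rightarrow> bool" where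
  "inW N A \<longleftrightarrow> (\<forall>j t. (if j < r then pidx N j else 0) \<le> t \<longrightarrow> coeff (A j) t = 0)"

lemma inW_deg_lt: "inW N A \<Longrightarrow> j < r \<Longrightarrow> deg_lt (A j) (pidx N j)"
  unfolding inW_def deg_lt_def by (metis)

lemma inW_high: "inW N A \<Longrightarrow> r \<le> j \<Longrightarrow> A j = 0"
  unfolding inW_def by (auto simp: poly_eq_iff)

lemma inW_mono: "inW N A \<Longrightarrow> N \<le> M \<Longrightarrow> inW M A"
  unfolding inW_def using pidx_mono by (smt (verit) le_trans)

lemma tri:
  assumes "inW N A"
  shows "Phi (PP N) A = 0"
proof -
  have "L j (PP N * A j) = 0" if j: "j < r" for j
  proof -
    have "A j = (\<Sum>t<pidx N j. monom (coeff (A j) t) t)"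
      by (rule poly_monom_expand[OF inW_deg_lt[OF assms j]])
    have mc: "monom c t = smult c (monom 1 t)" for c :: real and t
      by (simp add: smult_monom)
    have "PP N * A j = PP N * (\<Sum>t<pidx N j. monom (coeff (A j) t) t)"
      using \<open>A j = _\<close> by metis
    also have "\<dots> = (\<Sum>t<pidx N j. smult (coeff (A j) t) (monom 1 t * PP N))"
      unfolding sum_distrib_left by (rule sum.cong[OF refl]) (subst mc, simp add: mult.commute)
    finally have "L j (PP N * A j) = L j (\<Sum>t<pidx N j. smult (coeff (A j) t) (monom 1 t * PP N))"
      by simp
    also have "\<dots> = (\<Sum>t<pidx N j. coeff (A j) t * (\<integral>x. x ^ t * poly (PP N) x \<partial>\<mu>s j))"
      by (simp add: L_sum[OF j] L_smult int_xk)
    also have "\<dots> = 0" using P_orth[OF j] by simp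
    finally show ?thesis .
  qed
  then show ?thesis unfolding Phi_def by simp
qed

end

context mctx begin

definition gam :: "nat \<Rightarrow> real" where
  "gam N = (\<integral>x. x ^ (pidx N (i N)) * poly (PP N) x \<partial>\<mu>s (i N))"

lemma gam_nz: "gam N \<noteq> 0"
proof
  assume g0: "gam N = 0"
  define q where "q = PP (Suc N) + PP N"
  have dlt: "degree (PP N) < degree (PP (Suc N))" by (simp add: P_deg)
  have mq: "mop_cond \<mu>s r (pidx (Suc N)) q"
    unfolding mop_cond_def
  proof (intro conjI allI impI)
    show "lead_coeff q = 1" unfolding q_def
      using dlt by (simp add: lead_coeff_add_le P_lead degree_add_eq_left coeff_eq_0)
    show "degree q = mindex_size r (pidx (Suc N))" unfolding q_def
      using dlt by (simp add: degree_add_eq_left P_deg size_pidx)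
    fix j k assume j: "j < r" and k: "k < pidx (Suc N) j"
    have "(\<integral>x. x ^ k * poly q x \<partial>\<mu>s j) = L j (monom 1 k * PP (Suc N)) + L j (monom 1 k * PP N)"
      unfolding int_xk q_def by (simp add: distrib_left L_add[OF j])
    also have "L j (monom 1 k * PP (Suc N)) = 0"
      using P_orth[OF j k] by (simp add: int_xk)
    also have "L j (monom 1 k * PP N) = 0"
    proof (cases "k < pidx N j")
      case True
      then show ?thesis using P_orth[OF j True] by (simp add: int_xk)
    next
      case False
      then have "j = i N" "k = pidx N j" using k by (auto simp: pidx_Suc split: if_splits)
      then show ?thesis using g0 unfolding gam_def by (simp add: int_xk)
    qed
    finally show "(\<integral>x. x ^ k * poly q x \<partial>\<mu>s j) = 0" by simp
  qed
  have "q = PP (Suc N)" by (rule P_unique[OF mq])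
  then show False using P_nz[of N] unfolding q_def by simp
qed

definition u :: "nat \<Rightarrow> nat \<Rightarrow> real poly" where
  "u N = (\<lambda>j. if j = i N then monom 1 (pidx N (i N)) else 0)"

lemma inW_u: "inW (Suc N) (u N)"
  unfolding inW_def u_def using path by (auto simp: pidx_Suc)

lemma Phi_u: "Phi f (u N) = L (i N) (f * monom 1 (pidx N (i N)))"
proof -
  have "Phi f (u N) = (\<Sum>j<r. if j = i N then L (i N) (f * monom 1 (pidx N (i N))) else 0)"
    unfolding Phi_def u_def by (rule sum.cong) (auto simp: L_0)
  also have "\<dots> = L (i N) (f * monom 1 (pidx N (i N)))"
    using path by (simp add: sum.delta)
  finally show ?thesis .
qed

lemma Phi_P_u: "Phi (PP N) (u N) = gam N"
  unfolding Phi_u gam_def int_xk by (simp add: mult.commute)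

lemma inW_zero: "inW N (\<lambda>_. 0)"
  unfolding inW_def by simp

lemma inW_add: "inW N A \<Longrightarrow> inW N B \<Longrightarrow> inW N (\<lambda>j. A j + B j)"
  unfolding inW_def by simp

lemma inW_smult: "inW N A \<Longrightarrow> inW N (\<lambda>j. smult c (A j))"
  unfolding inW_def by simp

lemma inW_diff: "inW N A \<Longrightarrow> inW N B \<Longrightarrow> inW N (\<lambda>j. A j - B j)"
  unfolding inW_def by simp

lemma inW_decomp:
  assumes A: "inW (Suc N) A"
  shows "inW N (\<lambda>j. A j - smult (coeff (A (i N)) (pidx N (i N))) (u N j))"
  unfolding inW_def
proof (intro allI impI)
  fix j t assume t: "(if j < r then pidx N j else 0) \<le> t"
  define c where "c = coeff (A (i N)) (pidx N (i N))"
  show "coeff (A j - smult (coeff (A (i N)) (pidx N (i N))) (u N j)) t = 0"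
  proof (cases "j = i N")
    case True
    then have jr: "j < r" using path by auto
    show ?thesis
    proof (cases "t = pidx N j")
      case True
      then show ?thesis using \<open>j = i N\<close> by (simp add: u_def)
    next
      case False
      then have "pidx (Suc N) j \<le> t" using t jr \<open>j = i N\<close> by (auto simp: pidx_Suc)
      then have "coeff (A j) t = 0" using A jr unfolding inW_def by auto
      then show ?thesis using \<open>j = i N\<close> False by (simp add: u_def)
    qed
  next
    case False
    then have "(if j < r then pidx (Suc N) j else 0) \<le> t" using t by (auto simp: pidx_Suc)
    then have "coeff (A j) t = 0" using A unfolding inW_def by auto
    then show ?thesis using False by (simp add: u_def)
  qed
qed

lemma inW_recompose:
  "A = (\<lambda>j. (A j - smult c (u N j)) + smult c (u N j))"
  by simp

lemma uniq: "inW N D \<Longrightarrow> (\<forall>t<N. Psi t D = 0) \<Longrightarrow> D = (\<lambda>_. 0)"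
proof (induction N arbitrary: D)
  case 0
  then have "\<forall>j t. coeff (D j) t = 0" unfolding inW_def by (simp add: pidx_0)
  then show ?case by (auto simp: poly_eq_iff)
next
  case (Suc N)
  define c where "c = coeff (D (i N)) (pidx N (i N))"
  define D' where "D' = (\<lambda>j. D j - smult c (u N j))"
  have D': "inW N D'" unfolding D'_def c_def by (rule inW_decomp[OF Suc.prems(1)])
  have "Phi (PP N) D = (\<Sum>t<Suc N. coeff (PP N) t * Psi t D)"
    by (rule Phi_expand) (simp add: deg_lt_degree P_deg)
  also have "\<dots> = 0" using Suc.prems(2) by simp
  finally have z: "Phi (PP N) D = 0" .
  have "Phi (PP N) D = Phi (PP N) D' + c * gam N"
  proof -
    have "D = (\<lambda>j. D' j + smult c (u N j))" unfolding D'_def by simp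
    then have "Phi (PP N) D = Phi (PP N) (\<lambda>j. D' j + smult c (u N j))" by simp
    also have "\<dots> = Phi (PP N) D' + c * Phi (PP N) (u N)"
      by (simp add: Phi_add_right Phi_smult_right)
    finally show ?thesis using Phi_P_u by simp
  qed
  then have "c * gam N = 0" using z tri[OF D'] by simp
  then have c0: "c = 0" using gam_nz by simp
  then have "D' = D" unfolding D'_def by simp
  then have "inW N D" using D' by simp
  moreover have "\<forall>t<N. Psi t D = 0" using Suc.prems(2) by simp
  ultimately show ?case by (rule Suc.IH)
qed

lemma exist: "\<exists>A. inW N A \<and> (\<forall>t<N. Psi t A = y t)"
proof (induction N arbitrary: y)
  case 0
  show ?case by (intro exI[of _ "\<lambda>_. 0"]) (simp add: inW_zero)
next
  case (Suc N)
  define c where "c = (y N + (\<Sum>t<N. coeff (PP N) t * y t)) / gam N"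
  obtain A' where A': "inW N A'" "\<forall>t<N. Psi t A' = y t - c * Psi t (u N)"
    using Suc.IH[of "\<lambda>t. y t - c * Psi t (u N)"] by blast
  define A where "A = (\<lambda>j. A' j + smult c (u N j))"
  have inA: "inW (Suc N) A" unfolding A_def
    by (intro inW_add inW_smult inW_u inW_mono[OF A'(1)]) simp
  have PsiA: "Psi t A = Psi t A' + c * Psi t (u N)" for t
    unfolding A_def by (simp add: Psi_add Psi_smult)
  have lt: "\<forall>t<N. Psi t A = y t" using A'(2) PsiA by simp
  have "Phi (PP N) A = Phi (PP N) A' + c * gam N"
    unfolding A_def by (simp add: Phi_add_right Phi_smult_right Phi_P_u)
  also have "\<dots> = c * gam N" using tri[OF A'(1)] by simp
  also have "\<dots> = y N + (\<Sum>t<N. coeff (PP N) t * y t)"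
    unfolding c_def using gam_nz by simp
  finally have e1: "Phi (PP N) A = y N + (\<Sum>t<N. coeff (PP N) t * y t)" .
  have "Phi (PP N) A = (\<Sum>t<Suc N. coeff (PP N) t * Psi t A)"
    by (rule Phi_expand) (simp add: deg_lt_degree P_deg)
  also have "\<dots> = Psi N A + (\<Sum>t<N. coeff (PP N) t * y t)"
    using lt P_lead[of N] by (simp add: P_deg)
  finally have "Psi N A = y N" using e1 by simp
  then have "\<forall>t<Suc N. Psi t A = y t" using lt less_Suc_eq by auto
  with inA show ?case by blast
qed

lemma typeI_cond_iff:
  "typeI_cond \<mu>s r (pidx N) A \<longleftrightarrow> inW N A \<and> (\<forall>t<N. Psi t A = (if t = N - 1 then 1 else 0))"
proof -
  have W: "inW N A \<longleftrightarrow> (\<forall>j<r. if pidx N j = 0 then A j = 0 else degree (A j) < pidx N j) \<and> (\<forall>j\<ge>r. A j = 0)"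
  proof
    assume h: "inW N A"
    have "if pidx N j = 0 then A j = 0 else degree (A j) < pidx N j" if j: "j < r" for j
      using inW_deg_lt[OF h j] by (auto simp: deg_lt_degree)
    moreover have "A j = 0" if "j \<ge> r" for j using inW_high[OF h that] .
    ultimately show "(\<forall>j<r. if pidx N j = 0 then A j = 0 else degree (A j) < pidx N j) \<and> (\<forall>j\<ge>r. A j = 0)"
      by blast
  next
    assume h: "(\<forall>j<r. if pidx N j = 0 then A j = 0 else degree (A j) < pidx N j) \<and> (\<forall>j\<ge>r. A j = 0)"
    show "inW N A" unfolding inW_def
    proof (intro allI impI)
      fix j t assume t: "(if j < r then pidx N j else 0) \<le> t"
      show "coeff (A j) t = 0"
      proof (cases "j < r")
        case True
        then have "deg_lt (A j) (pidx N j)" using h by (auto simp: deg_lt_degree split: if_splits)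
        then show ?thesis using t True unfolding deg_lt_def by auto
      qed (use h in auto)
    qed
  qed
  show ?thesis unfolding typeI_cond_def W size_pidx Psi_def by blast
qed

abbreviation Q where "Q m \<equiv> typeI \<mu>s r (pidx (Suc m))"

lemma Q_spec: "inW (Suc m) (Q m) \<and> (\<forall>t<Suc m. Psi t (Q m) = (if t = m then 1 else 0))"
proof -
  have "\<exists>!A. typeI_cond \<mu>s r (pidx (Suc m)) A"
  proof -
    obtain A where A: "inW (Suc m) A" "\<forall>t<Suc m. Psi t A = (if t = m then 1 else 0)"
      using exist[of "Suc m" "\<lambda>t. if t = m then 1 else 0"] by blast
    show ?thesis
    proof (rule ex1I[of _ A])
      show "typeI_cond \<mu>s r (pidx (Suc m)) A" using A by (simp add: typeI_cond_iff)
      fix B assume "typeI_cond \<mu>s r (pidx (Suc m)) B"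
      then have B: "inW (Suc m) B" "\<forall>t<Suc m. Psi t B = (if t = m then 1 else 0)"
        by (simp_all add: typeI_cond_iff)
      have "(\<lambda>j. B j - A j) = (\<lambda>_. 0)"
        by (rule uniq[of "Suc m"]) (use A B in \<open>auto intro: inW_diff simp: Psi_diff\<close>)
      then show "B = A" by (metis right_minus_eq ext)
    qed
  qed
  then have "typeI_cond \<mu>s r (pidx (Suc m)) (Q m)" unfolding typeI_def by (rule theI')
  then show ?thesis by (simp add: typeI_cond_iff)
qed

lemma biorth: "Phi (PP l) (Q m) = (if l = m then 1 else 0)"
proof (cases "l \<le> m")
  case True
  have "Phi (PP l) (Q m) = (\<Sum>t<Suc l. coeff (PP l) t * Psi t (Q m))"
    by (rule Phi_expand) (simp add: deg_lt_degree P_deg)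
  also have "\<dots> = (\<Sum>t<Suc l. if t = m then coeff (PP l) t else 0)"
    using Q_spec[of m] True by (intro sum.cong) auto
  also have "\<dots> = (if l = m then 1 else 0)"
    using True P_lead[of l] by (auto simp: sum.delta P_deg)
  finally show ?thesis .
next
  case False
  then have "inW l (Q m)" using Q_spec[of m] inW_mono by auto
  then show ?thesis using tri False by auto
qed

lemma Phi_coord: "Phi f (Q m) = coord PP f m"
proof -
  define n where "n = max (Suc (degree f)) (Suc m)"
  have "f = (\<Sum>k<n. smult (coord PP f k) (PP k))"
    by (rule coord_expand[OF P_basis]) (auto simp: deg_lt_degree n_def)
  then have "Phi f (Q m) = (\<Sum>k<n. coord PP f k * Phi (PP k) (Q m))"
    by (metis (no_types, lifting) Phi_smult_left Phi_sum_left sum.cong)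
  also have "\<dots> = (\<Sum>k<n. if k = m then coord PP f k else 0)"
    by (intro sum.cong) (auto simp: biorth)
  also have "\<dots> = coord PP f m" by (simp add: sum.delta n_def)
  finally show ?thesis .
qed

end

context mctx begin

lemma w_borel: "j < r \<Longrightarrow> w j \<in> borel_measurable \<mu>"
  using w_meas measurable_cong_sets[OF borel_mu refl] by blast

lemma poly_meas_mu: "(\<lambda>x. poly h x) \<in> borel_measurable \<mu>"
  using poly_borel measurable_cong_sets[OF borel_mu refl] by blast

lemma dens_int:
  assumes j: "j < r"
  shows "integrable \<mu> (\<lambda>x. w j x * poly h x) \<and> (\<integral>x. w j x * poly h x \<partial>\<mu>) = L j h"
proof -
  have ae: "AE x in \<mu>. 0 \<le> w j x" using w_meas j by auto
  have dj: "\<mu>s j = density \<mu> (\<lambda>x. ennreal (w j x))" using w_RN j by auto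
  have "integrable (density \<mu> (\<lambda>x. ennreal (w j x))) (\<lambda>x. poly h x)"
    using int_poly[OF j, of h] dj by simp
  then have i1: "integrable \<mu> (\<lambda>x. w j x * poly h x)"
    using integrable_density[OF poly_meas_mu w_borel[OF j] ae] by simp
  have "L j h = (\<integral>x. poly h x \<partial>density \<mu> (\<lambda>x. ennreal (w j x)))"
    unfolding L_def using dj by simp
  also have "\<dots> = (\<integral>x. w j x * poly h x \<partial>\<mu>)"
    using integral_density[OF poly_meas_mu w_borel[OF j] ae] by simp
  finally show ?thesis using i1 by simp
qed

lemma qth_expand: "poly f x * qth \<mu>s r i w m x = (\<Sum>j<r. w j x * poly (f * Q m j) x)"
  unfolding qth_def by (simp add: sum_distrib_left algebra_simps)

lemma qth_int:
  "integrable \<mu> (\<lambda>x. poly f x * qth \<mu>s r i w m x) \<and> (\<integral>x. poly f x * qth \<mu>s r i w m x \<partial>\<mu>) = coord PP f m"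
proof -
  have i: "integrable \<mu> (\<lambda>x. \<Sum>j<r. w j x * poly (f * Q m j) x)"
    by (rule Bochner_Integration.integrable_sum) (metis dens_int lessThan_iff)
  have "(\<integral>x. (\<Sum>j<r. w j x * poly (f * Q m j) x) \<partial>\<mu>) = (\<Sum>j<r. \<integral>x. w j x * poly (f * Q m j) x \<partial>\<mu>)"
    by (rule Bochner_Integration.integral_sum) (metis dens_int lessThan_iff)
  also have "\<dots> = (\<Sum>j<r. L j (f * Q m j))"
    by (rule sum.cong) (metis dens_int lessThan_iff)+
  also have "\<dots> = coord PP f m" using Phi_coord[of f m] unfolding Phi_def .
  finally show ?thesis using i by (simp add: qth_expand)
qed

lemma eta_formula: "eta_int \<mu> \<mu>s r i w n f = (\<Sum>k<n. coord PP (f * PP k) k) / real n"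
proof -
  have e: "poly f x * CD_kernel \<mu>s r i w n x x = (\<Sum>k<n. poly (f * PP k) x * qth \<mu>s r i w k x)" for x
    unfolding CD_kernel_def by (simp add: sum_distrib_left algebra_simps)
  have "(\<integral>x. poly f x * CD_kernel \<mu>s r i w n x x \<partial>\<mu>) = (\<integral>x. (\<Sum>k<n. poly (f * PP k) x * qth \<mu>s r i w k x) \<partial>\<mu>)"
    by (simp add: e)
  also have "\<dots> = (\<Sum>k<n. \<integral>x. poly (f * PP k) x * qth \<mu>s r i w k x \<partial>\<mu>)"
    by (rule Bochner_Integration.integral_sum) (metis qth_int)
  also have "\<dots> = (\<Sum>k<n. coord PP (f * PP k) k)"
    by (rule sum.cong) (metis qth_int)+
  finally show ?thesis unfolding eta_int_def by simp
qed

lemma Jmat_eq: "Jmat \<mu>s r i a c = coord PP ([:0, 1:] * PP a) c"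
proof -
  define c0 where "c0 = coord PP ([:0, 1:] * PP a)"
  have dl: "deg_lt ([:0, 1:] * PP a) (Suc (Suc a))"
    by (simp add: deg_lt_def coeff_eq_0 degree_mult_le P_deg)
  have P: "(\<lambda>c. (\<forall>k>Suc a. c k = 0) \<and> [:0, 1:] * PP a = (\<Sum>k\<le>Suc a. smult (c k) (PP k))) c0"
  proof (intro conjI allI impI)
    fix k assume "Suc a < k"
    then show "c0 k = 0" unfolding c0_def by (intro coord_high[OF P_basis dl]) auto
  next
    show "[:0, 1:] * PP a = (\<Sum>k\<le>Suc a. smult (c0 k) (PP k))"
      unfolding c0_def using coord_expand[OF P_basis dl] by (simp add: lessThan_Suc_atMost)
  qed
  have U: "c = c0" if h: "(\<forall>k>Suc a. c k = 0) \<and> [:0, 1:] * PP a = (\<Sum>k\<le>Suc a. smult (c k) (PP k))" for c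
  proof
    fix k
    have "[:0, 1:] * PP a = (\<Sum>k<Suc (Suc a). smult (c k) (PP k))" using h by (simp add: lessThan_Suc_atMost)
    from coord_eq[OF P_basis this, of k] show "c k = c0 k"
      using h unfolding c0_def by (auto simp: less_Suc_eq_le)
  qed
  have "Jmat \<mu>s r i a = c0"
    unfolding Jmat_def by (rule the1_equality) (use P U in blast)+
  then show ?thesis unfolding c0_def by simp
qed

end

section \<open>Complexification of real polynomials\<close>

abbreviation cp :: "real poly \<Rightarrow> complex poly" where
  "cp h \<equiv> map_poly complex_of_real h"

lemma coeff_cp: "coeff (cp h) n = complex_of_real (coeff h n)"
  by (simp add: coeff_map_poly)

lemma cp_add: "cp (a + b) = cp a + cp b"
  by (rule poly_eqI) (simp add: coeff_cp)

lemma cp_smult: "cp (smult c a) = smult (complex_of_real c) (cp a)"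
  by (rule poly_eqI) (simp add: coeff_cp)

lemma cp_0: "cp 0 = 0" by simp

lemma cp_sum: "cp (\<Sum>x\<in>A. F x) = (\<Sum>x\<in>A. cp (F x))"
  by (induction A rule: infinite_finite_induct) (auto simp: cp_add)

lemma cp_mult: "cp (a * b) = cp a * cp b"
  by (rule poly_eqI) (simp add: coeff_cp coeff_mult)

lemma cp_degree: "degree (cp h) = degree h"
  by (rule degree_map_poly) simp

lemma cp_lead: "lead_coeff (cp h) = complex_of_real (lead_coeff h)"
  by (simp add: cp_degree coeff_cp)

lemma cp_mod:
  assumes "b \<noteq> 0"
  shows "cp (a mod b) = cp a mod cp b"
proof -
  have "a = (a div b) * b + a mod b" by simp
  then have "cp a = cp (a mod b) + cp (a div b) * cp b"
    by (metis cp_add cp_mult add.commute)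
  then have "cp a mod cp b = cp (a mod b) mod cp b" by simp
  also have "\<dots> = cp (a mod b)"
  proof (cases "a mod b = 0")
    case True then show ?thesis by simp
  next
    case False
    then have "degree (a mod b) < degree b" using degree_mod_less[OF assms, of a] by auto
    then show ?thesis by (intro mod_poly_less) (simp add: cp_degree)
  qed
  finally show ?thesis by simp
qed

lemma cp_basis: "is_basis b \<Longrightarrow> is_basis (\<lambda>k. cp (b k))"
  unfolding is_basis_def by (metis cp_degree cp_lead of_real_1)

lemma coord_cp:
  assumes b: "is_basis b"
  shows "coord (\<lambda>k. cp (b k)) (cp h) k = complex_of_real (coord b h k)"
proof -
  define n where "n = Suc (max k (degree h))"
  have "h = (\<Sum>j<n. smult (coord b h j) (b j))"
    by (rule coord_expand[OF b]) (auto simp: deg_lt_degree n_def)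
  then have "cp h = (\<Sum>j<n. smult (complex_of_real (coord b h j)) (cp (b j)))"
    by (metis (no_types, lifting) cp_smult cp_sum sum.cong)
  from coord_eq[OF cp_basis[OF b] this, of k] show ?thesis by (simp add: n_def)
qed

section \<open>Abstract path bound\<close>

fun Cb :: "(nat \<Rightarrow> real) \<Rightarrow> nat \<Rightarrow> nat \<Rightarrow> real" where
  "Cb B 0 R = 1"
| "Cb B (Suc s) R = real (R + s + 2) * B (R + s + 1) * Cb B s (R + s + 1)"

lemma Cb_nonneg: "(\<And>R. 0 \<le> B R) \<Longrightarrow> 0 \<le> Cb B s R"
  by (induction s arbitrary: R) auto

lemma card_window: "card {c. c < Suc (Suc a) \<and> b \<le> c + s} \<le> R + s + 2" if "a \<le> b + R" for a b s R :: nat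
proof -
  have "{c. c < Suc (Suc a) \<and> b \<le> c + s} \<subseteq> {b - s..<Suc (Suc a)}" by auto
  then have "card {c. c < Suc (Suc a) \<and> b \<le> c + s} \<le> card {b - s..<Suc (Suc a)}"
    by (intro card_mono) auto
  also have "\<dots> \<le> R + s + 2" using that by simp
  finally show ?thesis .
qed

lemma path_bound:
  fixes K :: "nat \<Rightarrow> nat \<Rightarrow> real" and X :: "nat \<Rightarrow> nat \<Rightarrow> nat \<Rightarrow> real" and B :: "nat \<Rightarrow> real"
  assumes KB: "\<And>R a c. a \<le> c + R \<Longrightarrow> c \<le> a + R \<Longrightarrow> \<bar>K a c\<bar> \<le> B R"
    and X0: "\<And>a b. \<bar>X 0 a b\<bar> \<le> 1"
    and Xrec: "\<And>s a b. X (Suc s) a b = (\<Sum>c<Suc (Suc a). K a c * X s c b)"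
    and Xsupp: "\<And>s a b. a + s < b \<Longrightarrow> X s a b = 0"
  shows "a \<le> b + R \<Longrightarrow> b \<le> a + R \<Longrightarrow> \<bar>X s a b\<bar> \<le> Cb B s R"
proof (induction s arbitrary: R a b)
  case 0 then show ?case using X0 by simp
next
  case (Suc s)
  have B0: "0 \<le> B R" for R using KB[of 0 0 R] by auto
  define R' where "R' = R + s + 1"
  define S where "S = {c. c < Suc (Suc a) \<and> b \<le> c + s}"
  have "\<bar>X (Suc s) a b\<bar> \<le> (\<Sum>c<Suc (Suc a). \<bar>K a c\<bar> * \<bar>X s c b\<bar>)"
    unfolding Xrec by (rule order_trans[OF sum_abs]) (simp add: abs_mult)
  also have "\<dots> = (\<Sum>c\<in>S. \<bar>K a c\<bar> * \<bar>X s c b\<bar>)"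
    unfolding S_def
    by (rule sum.mono_neutral_right) (auto simp: Xsupp not_le)
  also have "\<dots> \<le> (\<Sum>c\<in>S. B R' * Cb B s R')"
  proof (rule sum_mono)
    fix c assume c: "c \<in> S"
    have "\<bar>K a c\<bar> \<le> B R'" using c Suc.prems unfolding S_def R'_def by (intro KB) auto
    moreover have "\<bar>X s c b\<bar> \<le> Cb B s R'" using c Suc.prems unfolding S_def R'_def by (intro Suc.IH) auto
    ultimately show "\<bar>K a c\<bar> * \<bar>X s c b\<bar> \<le> B R' * Cb B s R'"
      by (intro mult_mono) (auto simp: B0)
  qed
  also have "\<dots> = real (card S) * (B R' * Cb B s R')" by simp
  also have "\<dots> \<le> real (R + s + 2) * (B R' * Cb B s R')"
    using card_window[OF Suc.prems(1), of s] unfolding S_def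
    by (intro mult_right_mono) (auto intro!: mult_nonneg_nonneg B0 Cb_nonneg)
  finally show ?case by (simp add: R'_def mult.assoc)
qed

lemma mod_sum_smult: "(\<Sum>j\<in>A. smult (a j) (h j)) mod P = (\<Sum>j\<in>A. smult (a j) (h j mod P))"
  using mulmod_sum[where g=1 and A=A and a=a and h=h and P=P] by simp

lemma deg_lt_mod_mono:
  assumes "deg_lt h m" "P \<noteq> 0"
  shows "deg_lt (h mod P) m"
proof (cases "degree h < degree P")
  case True then show ?thesis using assms by (simp add: mod_poly_less)
next
  case False
  then have "h mod P = 0 \<or> degree (h mod P) < degree h" using degree_mod_less[OF assms(2), of h] by auto
  then show ?thesis using assms(1) by (auto simp: deg_lt_degree)
qed

lemma monom_Suc_mult: "monom (1::real) (Suc s) * h = monom 1 s * ([:0, 1:] * h)"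
proof -
  have "monom (1::real) (Suc s) = monom 1 s * monom 1 1" by (simp add: mult_monom)
  moreover have "monom (1::real) 1 = [:0, 1:]" by (simp add: monom_Suc monom_0)
  ultimately show ?thesis by (simp only: mult.assoc)
qed

lemma monom_smult1: "monom c t = smult c (monom (1::real) t)"
  by (simp add: smult_monom)

context mctx begin

definition Jc :: "nat \<Rightarrow> nat \<Rightarrow> real" where
  "Jc a c = coord PP ([:0, 1:] * PP a) c"

lemma dl_x: "deg_lt ([:0, 1:] * PP a) (Suc (Suc a))"
  by (simp add: deg_lt_def coeff_eq_0 degree_mult_le P_deg)

lemma x_P: "[:0, 1:] * PP a = (\<Sum>c<Suc (Suc a). smult (Jc a c) (PP c))"
  unfolding Jc_def by (rule coord_expand[OF P_basis dl_x])

definition Gm :: "nat \<Rightarrow> nat \<Rightarrow> nat \<Rightarrow> real" where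
  "Gm s a b = coord PP (monom 1 s * PP a) b"

lemma deg_lt_xP: "deg_lt (monom 1 s * PP a) (Suc (a + s))"
proof -
  have "degree (monom (1::real) s * PP a) \<le> s + a"
    using degree_mult_le[of "monom (1::real) s" "PP a"] by (simp add: P_deg degree_monom_eq)
  then show ?thesis by (auto simp: deg_lt_degree)
qed

lemma G_rec: "Gm (Suc s) a b = (\<Sum>c<Suc (Suc a). Jc a c * Gm s c b)"
proof -
  have "monom 1 (Suc s) * PP a = (\<Sum>c<Suc (Suc a). smult (Jc a c) (monom 1 s * PP c))"
    unfolding monom_Suc_mult x_P sum_distrib_left by (simp only: mult_smult_right)
  then show ?thesis unfolding Gm_def by (simp only: coord_sum[OF P_basis] coord_smult[OF P_basis])
qed

lemma G_supp: "a + s < b \<Longrightarrow> Gm s a b = 0"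
  unfolding Gm_def by (rule coord_high[OF P_basis deg_lt_xP]) simp

lemma G_0: "\<bar>Gm 0 a b\<bar> \<le> 1"
  unfolding Gm_def by (simp add: coord_basis[OF P_basis])

definition Hm :: "nat \<Rightarrow> nat \<Rightarrow> nat \<Rightarrow> nat \<Rightarrow> real" where
  "Hm n s a b = (if a < n then coord PP ((monom 1 s * PP a) mod PP n) b else 0)"

definition Km :: "nat \<Rightarrow> nat \<Rightarrow> nat \<Rightarrow> real" where
  "Km n a c = (if a < n \<and> c < n then Jc a c else 0)"

lemma P_mod: "c \<le> n \<Longrightarrow> PP c mod PP n = (if c < n then PP c else 0)"
  by (auto simp: mod_poly_less P_deg le_less)

lemma H_rec: "Hm n (Suc s) a b = (\<Sum>c<Suc (Suc a). Km n a c * Hm n s c b)"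
proof (cases "a < n")
  case True
  have "([:0, 1:] * PP a) mod PP n = (\<Sum>c<Suc (Suc a). smult (Jc a c) (PP c mod PP n))"
    unfolding x_P mod_sum_smult ..
  also have "\<dots> = (\<Sum>c<Suc (Suc a). smult (if c < n then Jc a c else 0) (PP c))"
    by (rule sum.cong[OF refl]) (use True in \<open>auto simp: P_mod\<close>)
  finally have m1: "([:0, 1:] * PP a) mod PP n = (\<Sum>c<Suc (Suc a). smult (if c < n then Jc a c else 0) (PP c))" .
  have "(monom 1 (Suc s) * PP a) mod PP n = (monom 1 s * (([:0, 1:] * PP a) mod PP n)) mod PP n"
    unfolding monom_Suc_mult by (rule mod_mult_right_eq[symmetric])
  also have "\<dots> = (\<Sum>c<Suc (Suc a). smult (if c < n then Jc a c else 0) ((monom 1 s * PP c) mod PP n))"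
    unfolding m1 mulmod_sum ..
  finally have m2: "(monom 1 (Suc s) * PP a) mod PP n = \<dots>" .
  have "Hm n (Suc s) a b = (\<Sum>c<Suc (Suc a). (if c < n then Jc a c else 0) * coord PP ((monom 1 s * PP c) mod PP n) b)"
    unfolding Hm_def if_P[OF True] m2 by (simp only: coord_sum[OF P_basis] coord_smult[OF P_basis])
  also have "\<dots> = (\<Sum>c<Suc (Suc a). Km n a c * Hm n s c b)"
    by (rule sum.cong[OF refl]) (use True in \<open>auto simp: Km_def Hm_def\<close>)
  finally show ?thesis .
qed (simp add: Hm_def Km_def)

lemma H_supp: "a + s < b \<Longrightarrow> Hm n s a b = 0"
  unfolding Hm_def
  by (auto intro!: coord_high[OF P_basis deg_lt_mod_mono[OF deg_lt_xP P_nz]])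

lemma H_0: "\<bar>Hm n 0 a b\<bar> \<le> 1"
  unfolding Hm_def by (simp add: P_mod coord_basis[OF P_basis])

lemma G_H_bound:
  assumes JB: "\<And>R a c. a \<le> c + R \<Longrightarrow> c \<le> a + R \<Longrightarrow> \<bar>Jc a c\<bar> \<le> Bf R"
  shows "\<bar>Gm s k k\<bar> \<le> Cb Bf s 0" "\<bar>Hm n s k k\<bar> \<le> Cb Bf s 0"
proof -
  show "\<bar>Gm s k k\<bar> \<le> Cb Bf s 0"
    using path_bound[of Jc Bf Gm, OF JB G_0 G_rec G_supp] by simp
  have KB: "\<bar>Km n a c\<bar> \<le> Bf R" if "a \<le> c + R" "c \<le> a + R" for R a c
    using JB[OF that] JB[of 0 0 R] unfolding Km_def by auto
  show "\<bar>Hm n s k k\<bar> \<le> Cb Bf s 0"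
    using path_bound[of "Km n" Bf "Hm n", OF KB H_0 H_rec H_supp] by simp
qed

lemma f_expand: "f * PP k = (\<Sum>t<Suc (degree f). smult (coeff f t) (monom 1 t * PP k))"
proof -
  have "f = (\<Sum>t<Suc (degree f). monom (coeff f t) t)"
    by (rule poly_monom_expand) (simp add: deg_lt_Suc_degree)
  then have "f * PP k = (\<Sum>t<Suc (degree f). monom (coeff f t) t) * PP k" by simp
  also have "\<dots> = (\<Sum>t<Suc (degree f). smult (coeff f t) (monom 1 t * PP k))"
    unfolding sum_distrib_right by (rule sum.cong[OF refl]) (subst monom_smult1, simp)
  finally show ?thesis .
qed

lemma coord_fP: "coord PP (f * PP k) k = (\<Sum>t<Suc (degree f). coeff f t * Gm t k k)"
  unfolding Gm_def by (subst f_expand) (simp only: coord_sum[OF P_basis] coord_smult[OF P_basis])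

lemma coord_fP_mod: "k < n \<Longrightarrow> coord PP ((f * PP k) mod PP n) k = (\<Sum>t<Suc (degree f). coeff f t * Hm n t k k)"
  unfolding Hm_def by (subst f_expand) (simp only: mod_sum_smult coord_sum[OF P_basis] coord_smult[OF P_basis] if_True)

lemma nu_formula:
  "nu_int \<mu>s r i n f = complex_of_real ((\<Sum>k<n. coord PP ((f * PP k) mod PP n) k) / real n)"
proof -
  have b: "is_basis (\<lambda>k. cp (PP k))" by (rule cp_basis[OF P_basis])
  have "(\<Sum>z\<in>{z. poly (cp (PP n)) z = 0}. of_nat (order z (cp (PP n))) * poly (cp f) z)
      = (\<Sum>k<n. coord (\<lambda>k. cp (PP k)) ((cp f * cp (PP k)) mod cp (PP n)) k)"
    by (rule complex_roots_trace[OF b]) (metis cp_lead P_lead of_real_1, simp add: cp_degree P_deg)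
  also have "\<dots> = (\<Sum>k<n. complex_of_real (coord PP ((f * PP k) mod PP n) k))"
    by (rule sum.cong[OF refl]) (simp add: cp_mult[symmetric] cp_mod[OF P_nz, symmetric] coord_cp[OF P_basis])
  finally show ?thesis unfolding nu_int_def by simp
qed

end

context mctx begin

lemma main_lim:
  assumes J_bounded: "\<forall>R::nat. \<exists>B. \<forall>a b. a \<le> b + R \<and> b \<le> a + R \<longrightarrow> \<bar>Jmat \<mu>s r i a b\<bar> \<le> B"
  shows "(\<lambda>n. cmod (nu_int \<mu>s r i n f - complex_of_real (eta_int \<mu> \<mu>s r i w n f))) \<longlonglongrightarrow> 0"
proof -
  obtain Bf where Bf: "\<forall>R. \<forall>a b. a \<le> b + R \<and> b \<le> a + R \<longrightarrow> \<bar>Jmat \<mu>s r i a b\<bar> \<le> Bf R"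
    using choice[OF J_bounded] by blast
  have JB: "\<bar>Jc a c\<bar> \<le> Bf R" if "a \<le> c + R" "c \<le> a + R" for R a c
    using Bf that unfolding Jc_def Jmat_eq[symmetric] by blast
  define d where "d = degree f"
  define M where "M = (\<Sum>t<Suc d. \<bar>coeff f t\<bar> * Cb Bf t 0)"
  define tm where "tm n k = coord PP ((f * PP k) mod PP n) k - coord PP (f * PP k) k" for n k
  have b1: "\<bar>coord PP (f * PP k) k\<bar> \<le> M" for k
  proof -
    have "\<bar>coord PP (f * PP k) k\<bar> \<le> (\<Sum>t<Suc d. \<bar>coeff f t * Gm t k k\<bar>)"
      unfolding coord_fP d_def by (rule sum_abs)
    also have "\<dots> \<le> M" unfolding M_def abs_mult
      by (intro sum_mono mult_left_mono G_H_bound(1)[OF JB]) auto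
    finally show ?thesis .
  qed
  have b2: "\<bar>coord PP ((f * PP k) mod PP n) k\<bar> \<le> M" if "k < n" for n k
  proof -
    have "\<bar>coord PP ((f * PP k) mod PP n) k\<bar> \<le> (\<Sum>t<Suc d. \<bar>coeff f t * Hm n t k k\<bar>)"
      unfolding coord_fP_mod[OF that] d_def by (rule sum_abs)
    also have "\<dots> \<le> M" unfolding M_def abs_mult
      by (intro sum_mono mult_left_mono G_H_bound(2)[OF JB]) auto
    finally show ?thesis .
  qed
  have tb: "\<bar>tm n k\<bar> \<le> 2 * M" if "k < n" for n k
    using b1[of k] b2[OF that] unfolding tm_def by linarith
  have tz: "tm n k = 0" if "k + d < n" for n k
  proof -
    have "degree (f * PP k) < degree (PP n)"
      using degree_mult_le[of f "PP k"] that by (simp add: P_deg d_def)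
    then show ?thesis unfolding tm_def by (simp add: mod_poly_less)
  qed
  have sb: "\<bar>\<Sum>k<n. tm n k\<bar> \<le> real d * (2 * M)" for n
  proof -
    have "(\<Sum>k<n. tm n k) = (\<Sum>k\<in>{n - d..<n}. tm n k)"
      by (rule sum.mono_neutral_right) (auto simp: tz)
    then have "\<bar>\<Sum>k<n. tm n k\<bar> \<le> (\<Sum>k\<in>{n - d..<n}. \<bar>tm n k\<bar>)"
      by (simp add: sum_abs)
    also have "\<dots> \<le> (\<Sum>k\<in>{n - d..<n}. 2 * M)"
      by (rule sum_mono) (auto intro: tb)
    also have "\<dots> = real (n - (n - d)) * (2 * M)" by simp
    also have "\<dots> \<le> real d * (2 * M)"
    proof (rule mult_right_mono)
      show "0 \<le> 2 * M" using tb[of 0 1] by linarith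
    qed simp
    finally show ?thesis .
  qed
  have eq: "cmod (nu_int \<mu>s r i n f - complex_of_real (eta_int \<mu> \<mu>s r i w n f)) = \<bar>\<Sum>k<n. tm n k\<bar> / real n" for n
  proof -
    have "nu_int \<mu>s r i n f - complex_of_real (eta_int \<mu> \<mu>s r i w n f)
        = complex_of_real ((\<Sum>k<n. tm n k) / real n)"
      unfolding nu_formula eta_formula tm_def by (simp add: sum_subtractf diff_divide_distrib)
    then show ?thesis by (simp only: norm_of_real abs_divide abs_of_nat)
  qed
  show ?thesis
  proof (rule Lim_null_comparison)
    show "\<forall>\<^sub>F n in sequentially. norm (cmod (nu_int \<mu>s r i n f - complex_of_real (eta_int \<mu> \<mu>s r i w n f))) \<le> (real d * (2 * M)) / of_nat n"
    proof (intro always_eventually allI)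
      fix n :: nat
      have "norm (cmod (nu_int \<mu>s r i n f - complex_of_real (eta_int \<mu> \<mu>s r i w n f))) = \<bar>\<Sum>k<n. tm n k\<bar> / real n"
        using eq[of n] by simp
      also have "\<dots> \<le> (real d * (2 * M)) / real n"
        by (rule divide_right_mono[OF sb]) simp
      finally show "norm (cmod (nu_int \<mu>s r i n f - complex_of_real (eta_int \<mu> \<mu>s r i w n f))) \<le> (real d * (2 * M)) / of_nat n" by simp
    qed
    show "(\<lambda>n. (real d * (2 * M)) / of_nat n) \<longlonglongrightarrow> 0" by (rule lim_const_over_n)
  qed
qed

end

theorem theorem4:
  fixes r :: nat and \<mu>s :: "nat \<Rightarrow> real measure" and \<mu> :: "real measure"
    and w :: "nat \<Rightarrow> real \<Rightarrow> real" and i :: "nat \<Rightarrow> nat"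
  assumes r_pos: "r \<ge> 1"
    and borel_mus: "\<forall>j<r. sets (\<mu>s j) = sets borel"
    and moments: "\<forall>j<r. \<forall>k::nat. integrable (\<mu>s j) (\<lambda>x. x ^ k)"
    and perfect: "perfect_system \<mu>s r"
    and borel_mu: "sets \<mu> = sets borel"
    and w_meas: "\<forall>j<r. w j \<in> borel_measurable borel \<and> (\<forall>x. 0 \<le> w j x)"
    and w_RN: "\<forall>j<r. \<mu>s j = density \<mu> (\<lambda>x. ennreal (w j x))"
    and path: "\<forall>l. i l < r"
    and J_bounded: "\<forall>R::nat. \<exists>B. \<forall>a b. a \<le> b + R \<and> b \<le> a + R \<longrightarrow> \<bar>Jmat \<mu>s r i a b\<bar> \<le> B"
  shows "(\<forall>l::nat. (\<lambda>n. cmod (nu_int \<mu>s r i n (monom 1 l) - complex_of_real (eta_int \<mu> \<mu>s r i w n (monom 1 l))))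
            \<longlonglongrightarrow> 0)
       \<and> (\<forall>f::real poly. (\<lambda>n. cmod (nu_int \<mu>s r i n f - complex_of_real (eta_int \<mu> \<mu>s r i w n f)))
            \<longlonglongrightarrow> 0)"
proof -
  interpret mctx r \<mu>s \<mu> w i
    by unfold_locales (use borel_mus moments perfect borel_mu w_meas w_RN path in auto)
  show ?thesis using main_lim[OF J_bounded] by blast
qed

end
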